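(* Let $g$ be an $n$-person WTT game form, let $i\in[n]$, and let $j\neq k$ be elements of $X_i$. Then $H_j^{\neq}(k)$ is a constant region or $H_k^{\neq}(j)$ is a constant region (or both are).
   Context: Let $X_1,\dots,X_n$ and $A$ be finite nonempty sets. An $n$-person game form is a map $g: X_1\times\cdots\times X_n\to A$; elements of $X=X_1\times\cdots\times X_n$ are strategy profiles, elements of $A$ are outcomes. For a direction $i\in[n]$ write $X_{-i}=\prod_{t\neq i}X_t$, and for $s\in X_i$, $y\in X_{-i}$ write $(s,y)$ for the profile with $i$-th coordinate $s$ and other coordinates $y$. The hyperplane perpendicular to direction $i$ at $s\in X_i$ is $H_s=\{x\in X: x_i=s\}$. The game form $g$ is weakly totally tight (WTT) if for every $i\in[n]$, all $s\neq s'$ in $X_i$ and all $y\neq y'$ in $X_{-i}$, at least one of $g(s,y)=g(s,y')$, $g(s,y)=g(s',y)$, $g(s',y')=g(s',y)$, $g(s',y')=g(s,y')$ holds. A set $S\subseteq X$ is a constant region if there is $c\in A$ with $g(x)=c$ for all $x\in S$. For a direction $i$ and distinct $j,k\in X_i$, set $H_j^{\neq}(k)=\{(j,y): y\in X_{-i},\ g(j,y)\neq g(k,y)\}$ and $H_j^{=}(k)=H_j\setminus H_j^{\neq}(k)$. *)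

theory Defs
  imports "HOL-Library.FuncSet"
begin

text \<open>Players are 1..n; strategy sets X i; a profile is an element of
  PiE {1..n} X. An element y of X_{-i} is an element of PiE ({1..n} - {i}) X,
  and the profile (s,y) is y(i := s).\<close>

definition profiles :: "nat \<Rightarrow> (nat \<Rightarrow> 's set) \<Rightarrow> (nat \<Rightarrow> 's) set" where
  "profiles n X = PiE {1..n} X"

definition others :: "nat \<Rightarrow> (nat \<Rightarrow> 's set) \<Rightarrow> nat \<Rightarrow> (nat \<Rightarrow> 's) set" where
  "others n X i = PiE ({1..n} - {i}) X"

definition game_form :: "nat \<Rightarrow> (nat \<Rightarrow> 's set) \<Rightarrow> 'a set \<Rightarrow> ((nat \<Rightarrow> 's) \<Rightarrow> 'a) \<Rightarrow> bool" where
  "game_form n X A g \<longleftrightarrow>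
     (\<forall>i\<in>{1..n}. finite (X i) \<and> X i \<noteq> {}) \<and> finite A \<and> A \<noteq> {} \<and>
     (\<forall>x\<in>profiles n X. g x \<in> A)"

definition WTT :: "nat \<Rightarrow> (nat \<Rightarrow> 's set) \<Rightarrow> ((nat \<Rightarrow> 's) \<Rightarrow> 'a) \<Rightarrow> bool" where
  "WTT n X g \<longleftrightarrow>
    (\<forall>i\<in>{1..n}. \<forall>s\<in>X i. \<forall>s'\<in>X i. \<forall>y\<in>others n X i. \<forall>y'\<in>others n X i.
       s \<noteq> s' \<longrightarrow> y \<noteq> y' \<longrightarrow>
       g (y(i := s)) = g (y'(i := s)) \<or> g (y(i := s)) = g (y(i := s')) \<or>
       g (y'(i := s')) = g (y(i := s')) \<or> g (y'(i := s')) = g (y'(i := s)))"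

definition constant_region :: "'a set \<Rightarrow> ((nat \<Rightarrow> 's) \<Rightarrow> 'a) \<Rightarrow> (nat \<Rightarrow> 's) set \<Rightarrow> bool" where
  "constant_region A g S \<longleftrightarrow> (\<exists>c\<in>A. \<forall>x\<in>S. g x = c)"

definition H_neq :: "nat \<Rightarrow> (nat \<Rightarrow> 's set) \<Rightarrow> ((nat \<Rightarrow> 's) \<Rightarrow> 'a) \<Rightarrow> nat \<Rightarrow> 's \<Rightarrow> 's \<Rightarrow> (nat \<Rightarrow> 's) set" where
  "H_neq n X g i j k = {y(i := j) | y. y \<in> others n X i \<and> g (y(i := j)) \<noteq> g (y(i := k))}"

end

theory Submission
  imports Defs
begin

lemma nonconst:
  assumes "game_form n X A g" "i \<in> {1..n}" "j \<in> X i"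
    and "\<not> constant_region A g (H_neq n X g i j k)"
  shows "\<exists>y\<in>others n X i. \<exists>y'\<in>others n X i.
     g (y(i := j)) \<noteq> g (y(i := k)) \<and> g (y'(i := j)) \<noteq> g (y'(i := k)) \<and>
     g (y(i := j)) \<noteq> g (y'(i := j))"
proof -
  have A: "A \<noteq> {}" using assms(1) unfolding game_form_def by blast
  obtain x0 where x0: "x0 \<in> H_neq n X g i j k"
    using assms(4) A unfolding constant_region_def by blast
  then obtain y where y: "y \<in> others n X i" "g (y(i := j)) \<noteq> g (y(i := k))" "x0 = y(i:=j)"
    unfolding H_neq_def by blast
  have "y(i:=j) \<in> profiles n X"
    using y(1) assms(2,3) unfolding profiles_def others_def
    by (auto simp: PiE_def Pi_def extensional_def)
  hence "g x0 \<in> A" using assms(1) y(3) unfolding game_form_def by blast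
  then obtain x where "x \<in> H_neq n X g i j k" and gx: "g x \<noteq> g x0"
    using assms(4) unfolding constant_region_def by blast
  then obtain y' where "y' \<in> others n X i" "g (y'(i := j)) \<noteq> g (y'(i := k))" "x = y'(i:=j)"
    unfolding H_neq_def by blast
  thus ?thesis using y gx by metis
qed

theorem mainTheorem2:
  fixes n :: nat and X :: "nat \<Rightarrow> 's set" and A :: "'a set" and g :: "(nat \<Rightarrow> 's) \<Rightarrow> 'a"
  assumes "game_form n X A g"
    and "WTT n X g"
    and "i \<in> {1..n}"
    and "j \<in> X i" and "k \<in> X i" and "j \<noteq> k"
  shows "constant_region A g (H_neq n X g i j k) \<or> constant_region A g (H_neq n X g i k j)"
proof (rule ccontr)
  assume "\<not> ?thesis"
  hence n1: "\<not> constant_region A g (H_neq n X g i j k)"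
    and n2: "\<not> constant_region A g (H_neq n X g i k j)" by auto
  let ?O = "others n X i"
  define a where "a y = g (y(i:=j))" for y
  define b where "b y = g (y(i:=k))" for y
  have W: "\<And>s s' y y'. s \<in> X i \<Longrightarrow> s' \<in> X i \<Longrightarrow> y \<in> ?O \<Longrightarrow> y' \<in> ?O \<Longrightarrow> s \<noteq> s' \<Longrightarrow> y \<noteq> y' \<Longrightarrow>
       g (y(i := s)) = g (y'(i := s)) \<or> g (y(i := s)) = g (y(i := s')) \<or>
       g (y'(i := s')) = g (y(i := s')) \<or> g (y'(i := s')) = g (y'(i := s))"
    using assms(2,3) unfolding WTT_def by blast
  have L1: "b y = b y'" if "y \<in> ?O" "y' \<in> ?O" "a y \<noteq> b y" "a y' \<noteq> b y'" "a y \<noteq> a y'" for y y'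
  proof -
    have "y \<noteq> y'" using that(5) by auto
    from W[OF assms(4,5) that(1,2) assms(6) this] that(3-5) show ?thesis
      unfolding a_def b_def by metis
  qed
  have L2: "a y = a y'" if "y \<in> ?O" "y' \<in> ?O" "a y \<noteq> b y" "a y' \<noteq> b y'" "b y \<noteq> b y'" for y y'
  proof -
    have "y \<noteq> y'" using that(5) by auto
    from W[OF assms(5,4) that(1,2) assms(6)[symmetric] this] that(3-5) show ?thesis
      unfolding a_def b_def by metis
  qed
  obtain y y' where yy: "y \<in> ?O" "y' \<in> ?O" "a y \<noteq> b y" "a y' \<noteq> b y'" "a y \<noteq> a y'"
    using nonconst[OF assms(1,3,4) n1] unfolding a_def b_def by blast
  obtain z z' where zz: "z \<in> ?O" "z' \<in> ?O" "a z \<noteq> b z" "a z' \<noteq> b z'" "b z \<noteq> b z'"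
    using nonconst[OF assms(1,3,5) n2] unfolding a_def b_def by metis
  have byy: "b y = b y'" using L1 yy by blast
  obtain w where w: "w \<in> ?O" "a w \<noteq> b w" "b w \<noteq> b y"
    using zz by metis
  have "a w = a y" using L2[OF w(1) yy(1) w(2) yy(3)] w(3) by metis
  moreover have "a w = a y'" using L2[OF w(1) yy(2) w(2) yy(4)] w(3) byy by metis
  ultimately show False using yy(5) by simp
qed

end
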